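(* Every online algorithm for Ordered Open End Bin Packing (where $1$-items may occur) has absolute competitive ratio at least $2$.
   Context: Ordered Open End Bin Packing (online): items with sizes in $(0,1]$ arrive one by one (items of size at least $1$ are treated as having size exactly $1$ and are called $1$-items). Each item must be assigned irrevocably upon arrival, without knowledge of future items, to a bin whose current total size is strictly below $1$ (possibly a new, empty bin). The cost is the number of bins used. $\mathrm{OPT}(I)$ is the minimum number of bins in an offline packing of the sequence $I$ obeying the same rule (items are added to bins in the order of the sequence, and an item can be added to a bin only if the bin's current total size is strictly below $1$). The absolute competitive ratio of an algorithm $\mathrm{ALG}$ is $\sup_I \mathrm{ALG}(I)/\mathrm{OPT}(I)$ over all nonempty inputs $I$. *)

theory Defs
  imports Complex_Main "HOL-Library.Extended_Real"
begin

text \<open>Ordered Open End Bin Packing. An input is a list of item sizes in (0,1]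
(items of size at least 1 are represented by size exactly 1).
A packing assigns to item i (0-based) a bin index a i.\<close>

definition valid_input :: "real list \<Rightarrow> bool" where
  "valid_input xs \<longleftrightarrow> (\<forall>x\<in>set xs. 0 < x \<and> x \<le> 1)"

definition load :: "real list \<Rightarrow> (nat \<Rightarrow> nat) \<Rightarrow> nat \<Rightarrow> nat \<Rightarrow> real" where
  "load xs a i b = (\<Sum>j\<in>{j. j < i \<and> a j = b}. xs ! j)"

definition valid_packing :: "real list \<Rightarrow> (nat \<Rightarrow> nat) \<Rightarrow> bool" where
  "valid_packing xs a \<longleftrightarrow> (\<forall>i < length xs. load xs a i (a i) < 1)"

definition nbins :: "real list \<Rightarrow> (nat \<Rightarrow> nat) \<Rightarrow> nat" where
  "nbins xs a = card (a ` {..<length xs})"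

definition OPT :: "real list \<Rightarrow> nat" where
  "OPT xs = Min {nbins xs a | a. valid_packing xs a}"

text \<open>A deterministic online algorithm: the bin chosen for an item depends only
on the sequence of items seen so far (the last element being the current item).\<close>
type_synonym online_alg = "real list \<Rightarrow> nat"

definition alg_assign :: "online_alg \<Rightarrow> real list \<Rightarrow> nat \<Rightarrow> nat" where
  "alg_assign A xs i = A (take (Suc i) xs)"

definition is_online_alg :: "online_alg \<Rightarrow> bool" where
  "is_online_alg A \<longleftrightarrow> (\<forall>xs. valid_input xs \<longrightarrow> valid_packing xs (alg_assign A xs))"

definition ALG :: "online_alg \<Rightarrow> real list \<Rightarrow> nat" where
  "ALG A xs = nbins xs (alg_assign A xs)"

definition abs_comp_ratio :: "online_alg \<Rightarrow> ereal" where
  "abs_comp_ratio A =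
     (SUP xs \<in> {xs. xs \<noteq> [] \<and> valid_input xs}. ereal (real (ALG A xs) / real (OPT xs)))"

end

theory Submission
  imports Defs
begin

definition fe :: "real \<Rightarrow> nat \<Rightarrow> real" where
  "fe e i = (if i mod 3 = 0 then e else if i mod 3 = 1 then 1 - e else 1)"

definition inp :: "real \<Rightarrow> nat \<Rightarrow> real list" where
  "inp e n = map (fe e) [0..<n]"

lemma inp_len[simp]: "length (inp e n) = n" by (simp add: inp_def)
lemma inp_nth[simp]: "i < n \<Longrightarrow> inp e n ! i = fe e i" by (simp add: inp_def)
lemma take_inp: "m \<le> n \<Longrightarrow> take m (inp e n) = inp e m"
  by (simp add: inp_def take_map)

lemma valid_inp: "0 < e \<Longrightarrow> e < 1 \<Longrightarrow> valid_input (inp e n)"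
  by (auto simp: valid_input_def inp_def fe_def)

lemma nbins_le: "nbins xs a \<le> length xs"
  unfolding nbins_def by (metis card_image_le card_lessThan finite_lessThan)

lemma OPT_le: assumes "valid_packing xs g" shows "OPT xs \<le> nbins xs g"
proof -
  have "finite {nbins xs a | a. valid_packing xs a}"
    by (rule finite_subset[of _ "{..length xs}"]) (auto simp: nbins_le)
  then show ?thesis unfolding OPT_def using assms by (intro Min_le) auto
qed

lemma OPT_pos: assumes "valid_packing xs g" "xs \<noteq> []" shows "1 \<le> OPT xs"
proof -
  have fin: "finite {nbins xs a | a. valid_packing xs a}"
    by (rule finite_subset[of _ "{..length xs}"]) (auto simp: nbins_le)
  have "OPT xs \<in> {nbins xs a | a. valid_packing xs a}"
    unfolding OPT_def using fin assms by (intro Min_in) auto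
  then obtain a where "OPT xs = nbins xs a" by auto
  moreover have "a ` {..<length xs} \<noteq> {}" using assms(2) by auto
  ultimately show ?thesis unfolding nbins_def
    by (metis One_nat_def Suc_leI card_gt_0_iff finite_imageI finite_lessThan)
qed

definition gp :: "nat \<Rightarrow> nat \<Rightarrow> nat" where
  "gp t i = (if i mod 3 = 0 \<or> i = t then 0 else Suc (i div 3))"

lemma gp_valid:
  assumes "0 < e" "e < 1" "real n * e \<le> 1" "n \<le> t + 1"
  shows "valid_packing (inp e n) (gp t)"
  unfolding valid_packing_def
proof (intro allI impI)
  fix i assume i: "i < length (inp e n)"
  hence i': "i < n" by simp
  show "load (inp e n) (gp t) i (gp t i) < 1"
  proof (cases "gp t i = 0")
    case True
    let ?S = "{j. j < i \<and> gp t j = 0}"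
    have "load (inp e n) (gp t) i 0 = (\<Sum>j\<in>?S. e)"
      unfolding load_def
    proof (rule sum.cong)
      fix j assume "j \<in> ?S"
      hence "j < i" "gp t j = 0" by auto
      moreover have "j \<noteq> t" using \<open>j < i\<close> i' assms(4) by linarith
      ultimately show "inp e n ! j = e" using i' by (auto simp: gp_def fe_def)
    qed simp
    also have "\<dots> = real (card ?S) * e" by simp
    also have "\<dots> \<le> real i * e"
    proof -
      have "card ?S \<le> card {..<i}" by (rule card_mono) auto
      thus ?thesis using assms(1) by (simp add: mult_right_mono)
    qed
    also have "\<dots> < real n * e" using i' assms(1) by simp
    finally show ?thesis using True assms(3) by simp
  next
    case False
    then obtain m where m: "gp t i = Suc m" by (cases "gp t i") auto
    let ?S = "{j. j < i \<and> gp t j = Suc m}"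
    have sub: "?S \<subseteq> {3*m+1}"
    proof
      fix j assume "j \<in> ?S"
      hence j: "j < i" "gp t j = Suc m" by auto
      have h1: "j mod 3 \<noteq> 0" "j div 3 = m" using j(2) by (auto simp: gp_def split: if_splits)
      have h2: "i mod 3 \<noteq> 0" "i div 3 = m" using m by (auto simp: gp_def split: if_splits)
      have "j = 3*m+1" using h1 h2 j(1) by presburger
      thus "j \<in> {3*m+1}" by simp
    qed
    have "load (inp e n) (gp t) i (Suc m) \<le> (\<Sum>j\<in>{3*m+1}. fe e j)"
      unfolding load_def
    proof -
      have "(\<Sum>j\<in>?S. inp e n ! j) = (\<Sum>j\<in>?S. fe e j)"
        using i' by (intro sum.cong) auto
      also have "\<dots> \<le> (\<Sum>j\<in>{3*m+1}. fe e j)"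
        using sub assms(1,2) by (intro sum_mono2) (auto simp: fe_def)
      finally show "(\<Sum>j\<in>?S. inp e n ! j) \<le> (\<Sum>j\<in>{3*m+1}. fe e j)" .
    qed
    also have "\<dots> = 1 - e" by (simp add: fe_def)
    finally show ?thesis using m assms(1) by simp
  qed
qed


lemma gp_bound1: "i < 3*j+2 \<Longrightarrow> gp (3*j+1) i \<le> j"
  unfolding gp_def by (simp split: if_split) presburger

lemma gp_bound2: "i < 3*k \<Longrightarrow> gp (3*k) i \<le> k"
  unfolding gp_def by (simp split: if_split) presburger

lemma alg_prefix: "i < m \<Longrightarrow> alg_assign A (take m xs) i = alg_assign A xs i"
  by (simp add: alg_assign_def min_def)

lemma ALG_prefix: "m \<le> length xs \<Longrightarrow> ALG A (take m xs) = card (alg_assign A xs ` {..<m})"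
  unfolding ALG_def nbins_def
  by (simp add: min_absorb1) (metis (no_types, lifting) alg_prefix image_cong lessThan_iff)

lemma load_ge:
  assumes "i \<le> length xs" "\<forall>j<length xs. 0 \<le> xs ! j" "S \<subseteq> {j. j < i \<and> a j = b}"
  shows "sum ((!) xs) S \<le> load xs a i b"
  unfolding load_def
  using assms by (intro sum_mono2) auto

lemma load_mono:
  assumes "i \<le> i'" "i' \<le> length xs" "\<forall>j<length xs. 0 \<le> xs ! j"
  shows "load xs a i b \<le> load xs a i' b"
  using load_ge[OF assms(2,3), of "{j. j < i \<and> a j = b}" a b] assms(1)
  unfolding load_def by fastforce

lemma fe_nonneg: "0 < e \<Longrightarrow> e < 1 \<Longrightarrow> 0 \<le> fe e i" by (simp add: fe_def)

lemma main_inv: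
  assumes A: "is_online_alg A" and k: "k \<ge> 1" and e: "e = 1/(3*k+1)"
    and xs: "xs = inp e (3*k)" and a: "a = alg_assign A xs"
  shows "j \<le> k \<Longrightarrow> (\<exists>m. 0<m \<and> m \<le> 3*k \<and> 2*OPT (inp e m) \<le> ALG A (inp e m)) \<or>
     (2*j \<le> card (a ` {..<3*j}) \<and> (\<forall>b\<in>a ` {..<3*j}. 1 \<le> load xs a (3*j) b))"
proof (induction j)
  case 0
  then show ?case by simp
next
  case (Suc j)
  have e0: "0 < e" and e1: "e < 1" using e k by auto
  have vp: "valid_packing xs a" using A valid_inp[OF e0 e1] unfolding is_online_alg_def xs a by blast
  have vl: "\<And>i. i < 3*k \<Longrightarrow> load xs a i (a i) < 1" using vp xs unfolding valid_packing_def by simp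
  have nn: "\<forall>j<length xs. 0 \<le> xs ! j" using xs fe_nonneg[OF e0 e1] by simp
  have len: "length xs = 3*k" using xs by simp
  have xsn: "\<And>i. i < 3*k \<Longrightarrow> xs ! i = fe e i" using xs by simp
  show ?case
  proof (cases "\<exists>m. 0<m \<and> m \<le> 3*k \<and> 2*OPT (inp e m) \<le> ALG A (inp e m)")
    case True thus ?thesis by blast
  next
    case False
    with Suc have IH: "2*j \<le> card (a ` {..<3*j})" "\<forall>b\<in>a ` {..<3*j}. 1 \<le> load xs a (3*j) b" by auto
    define B where "B = a ` {..<3*j}"
    have jk: "j < k" using Suc by simp
    have closed: "\<And>b i. b \<in> B \<Longrightarrow> 3*j \<le> i \<Longrightarrow> i \<le> 3*k \<Longrightarrow> 1 \<le> load xs a i b"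
      using IH(2) load_mono[OF _ _ nn] len unfolding B_def by (metis order_trans)
    have finB: "finite B" unfolding B_def by simp
    have c: "a (3*j) \<notin> B" using closed[of "a (3*j)" "3*j"] vl[of "3*j"] jk by fastforce
    have d: "a (3*j+1) \<notin> B" using closed[of "a (3*j+1)" "3*j+1"] vl[of "3*j+1"] jk by fastforce
    have im2: "a ` {..<3*j+2} = insert (a (3*j+1)) (insert (a (3*j)) B)"
      unfolding B_def by (simp add: lessThan_Suc numeral_2_eq_2 Suc3_eq_add_3 insert_commute)
    show ?thesis
    proof (cases "a (3*j+1) = a (3*j)")
      case False
      have "card (a ` {..<3*j+2}) = card B + 2" using im2 c d False finB by simp
      hence alg: "ALG A (inp e (3*j+2)) \<ge> 2*j+2"
        using ALG_prefix[of "3*j+2" xs A] take_inp[of "3*j+2" "3*k" e] xs a jk IH(1) B_def by simp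
      have vg: "valid_packing (inp e (3*j+2)) (gp (3*j+1))"
      proof (rule gp_valid[OF e0 e1])
        have "real (3*j+2) * e \<le> real (3*k+1) * e" using jk e0 by (intro mult_right_mono) auto
        moreover have "real (3*k+1) * e = 1" using e by simp
        ultimately show "real (3*j+2) * e \<le> 1" by simp
      qed simp
      have "gp (3*j+1) ` {..<3*j+2} \<subseteq> {..j}"
      proof
        fix y assume "y \<in> gp (3*j+1) ` {..<3*j+2}"
        then obtain i where "i < 3*j+2" "y = gp (3*j+1) i" by auto
        thus "y \<in> {..j}" using gp_bound1[of i j] by simp
      qed
      hence "nbins (inp e (3*j+2)) (gp (3*j+1)) \<le> card {..j}"
        unfolding nbins_def by (intro card_mono) auto
      hence "OPT (inp e (3*j+2)) \<le> j+1" using OPT_le[OF vg] by simp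
      with alg have "2*OPT (inp e (3*j+2)) \<le> ALG A (inp e (3*j+2))" by simp
      moreover have "3*j+2 \<le> 3*k" using jk by simp
      ultimately show ?thesis by (metis zero_less_Suc add_2_eq_Suc')
    next
      case True
      have "xs!(3*j) + xs!(3*j+1) \<le> load xs a (3*j+2) (a (3*j))"
      proof -
        have "sum ((!) xs) {3*j, 3*j+1} \<le> load xs a (3*j+2) (a (3*j))"
          using True jk len by (intro load_ge[OF _ nn]) auto
        thus ?thesis by simp
      qed
      moreover have "xs!(3*j) + xs!(3*j+1) = 1" using jk xsn by (simp add: fe_def)
      ultimately have cl: "1 \<le> load xs a (3*j+2) (a (3*j))" by simp
      have d2: "a (3*j+2) \<notin> insert (a (3*j)) B"
      proof
        assume h: "a (3*j+2) \<in> insert (a (3*j)) B"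
        have "1 \<le> load xs a (3*j+2) (a (3*j+2))"
        proof (cases "a (3*j+2) = a (3*j)")
          case True then show ?thesis using cl by simp
        next
          case False then show ?thesis using h closed[of "a (3*j+2)" "3*j+2"] jk by auto
        qed
        moreover have "load xs a (3*j+2) (a (3*j+2)) < 1" using vl jk by simp
        ultimately show False by simp
      qed
      have "{..<3*Suc j} = insert (3*j+2) {..<3*j+2}" by auto
      hence im3: "a ` {..<3*Suc j} = insert (a (3*j+2)) (insert (a (3*j)) B)"
        using im2 True by (simp only: image_insert) simp
      have cardok: "2 * Suc j \<le> card (a ` {..<3*Suc j})"
        using im3 c d2 finB IH(1) B_def by simp
      have allc: "\<forall>b\<in>a ` {..<3*Suc j}. 1 \<le> load xs a (3*Suc j) b"
      proof
        fix b assume "b \<in> a ` {..<3*Suc j}"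
        hence "b = a (3*j+2) \<or> b = a (3*j) \<or> b \<in> B" using im3 by auto
        moreover have "1 \<le> load xs a (3*Suc j) (a (3*j+2))"
        proof -
          have "sum ((!) xs) {3*j+2} \<le> load xs a (3*Suc j) (a (3*j+2))"
            using jk len by (intro load_ge[OF _ nn]) auto
          moreover have "fe e (3*j+2) = 1"
          proof -
            have "(3*j+2) mod 3 = (2::nat)" by presburger
            thus ?thesis unfolding fe_def by simp
          qed
          ultimately show ?thesis using xsn[of "3*j+2"] jk by simp
        qed
        moreover have "1 \<le> load xs a (3*Suc j) (a (3*j))"
        proof -
          have "load xs a (3*j+2) (a (3*j)) \<le> load xs a (3*Suc j) (a (3*j))"
            using len jk by (intro load_mono[OF _ _ nn]) auto
          thus ?thesis using cl by simp
        qed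
        moreover have "b \<in> B \<Longrightarrow> 1 \<le> load xs a (3*Suc j) b" using closed jk by simp
        ultimately show "1 \<le> load xs a (3*Suc j) b" by blast
      qed
      show ?thesis using cardok allc by blast
    qed
  qed
qed


lemma ratio_k:
  assumes A: "is_online_alg A" and k: "k \<ge> 1"
  shows "ereal (2*real k/(real k+1)) \<le> abs_comp_ratio A"
proof -
  define e :: real where "e = 1/(3*k+1)"
  define xs where "xs = inp e (3*k)"
  define a where "a = alg_assign A xs"
  have e0: "0 < e" and e1: "e < 1" using e_def k by auto
  have sup: "\<And>ys. ys \<noteq> [] \<Longrightarrow> valid_input ys \<Longrightarrow>
      ereal (real (ALG A ys) / real (OPT ys)) \<le> abs_comp_ratio A"
    unfolding abs_comp_ratio_def by (rule SUP_upper) auto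
  have opos: "\<And>ys. ys \<noteq> [] \<Longrightarrow> valid_input ys \<Longrightarrow> 1 \<le> OPT ys"
    using A unfolding is_online_alg_def by (metis OPT_pos)
  have q: "2*real k/(real k+1) \<le> 2"
    by (simp add: divide_le_eq)
  from main_inv[OF A k e_def xs_def a_def order_refl]
  show ?thesis
  proof
    assume "\<exists>m. 0<m \<and> m \<le> 3*k \<and> 2*OPT (inp e m) \<le> ALG A (inp e m)"
    then obtain m where m: "0<m" "2*OPT (inp e m) \<le> ALG A (inp e m)" by blast
    let ?y = "inp e m"
    have ne: "?y \<noteq> []" using m(1) by (cases m) (auto simp: inp_def)
    have vi: "valid_input ?y" using valid_inp[OF e0 e1] .
    have o1: "1 \<le> OPT ?y" using opos[OF ne vi] .
    have "2 \<le> real (ALG A ?y) / real (OPT ?y)"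
      using m(2) o1 by (simp add: le_divide_eq)
    hence "ereal (2*real k/(real k+1)) \<le> ereal (real (ALG A ?y) / real (OPT ?y))"
      using q by simp
    also have "\<dots> \<le> abs_comp_ratio A" using sup[OF ne vi] .
    finally show ?thesis .
  next
    assume h: "2*k \<le> card (a ` {..<3*k}) \<and> (\<forall>b\<in>a ` {..<3*k}. 1 \<le> load xs a (3*k) b)"
    have ne: "xs \<noteq> []" using k by (cases k) (auto simp: xs_def inp_def)
    have vi: "valid_input xs" unfolding xs_def using valid_inp[OF e0 e1] .
    have o1: "1 \<le> OPT xs" using opos[OF ne vi] .
    have alg: "2*k \<le> ALG A xs" using h unfolding ALG_def nbins_def a_def xs_def by simp
    have vg: "valid_packing xs (gp (3*k))" unfolding xs_def
    proof (rule gp_valid[OF e0 e1])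
      have "real (3*k) * e \<le> real (3*k+1) * e" using e0 by (intro mult_right_mono) auto
      moreover have "real (3*k+1) * e = 1" using e_def by simp
      ultimately show "real (3*k) * e \<le> 1" by simp
    qed simp
    have "gp (3*k) ` {..<3*k} \<subseteq> {..k}"
    proof
      fix y assume "y \<in> gp (3*k) ` {..<3*k}"
      then obtain i where "i < 3*k" "y = gp (3*k) i" by auto
      thus "y \<in> {..k}" using gp_bound2[of i k] by simp
    qed
    hence "nbins xs (gp (3*k)) \<le> card {..k}"
      unfolding nbins_def xs_def by (intro card_mono) auto
    hence ok: "OPT xs \<le> k+1" using OPT_le[OF vg] by simp
    have "2*real k/(real k+1) \<le> 2*real k / real (OPT xs)"
      using ok o1 k by (intro divide_left_mono) auto
    also have "\<dots> \<le> real (ALG A xs) / real (OPT xs)"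
      using alg o1 by (intro divide_right_mono) auto
    finally have "ereal (2*real k/(real k+1)) \<le> ereal (real (ALG A xs) / real (OPT xs))" by simp
    also have "\<dots> \<le> abs_comp_ratio A" using sup[OF ne vi] .
    finally show ?thesis .
  qed
qed

theorem mainTheorem4:
  assumes "is_online_alg A"
  shows "abs_comp_ratio A \<ge> 2"
proof (rule ereal_le_epsilon2)
  fix d :: real assume d: "0 < d"
  obtain k :: nat where kk: "2/d < real k" using reals_Archimedean2 by blast
  have k0: "0 < real k" using kk d by (smt (verit) divide_pos_pos)
  hence k1: "k \<ge> 1" by simp
  have "2/(real k+1) < d"
  proof -
    have "2 < d * real k" using kk d by (simp add: divide_less_eq mult.commute)
    hence "2 < d * (real k + 1)" using d by (smt (verit) distrib_left mult_cancel_left1)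
    thus ?thesis using k0 by (simp add: divide_less_eq mult.commute)
  qed
  hence "2 \<le> 2*real k/(real k+1) + d"
    using k0 by (simp add: field_simps)
  hence "ereal 2 \<le> ereal (2*real k/(real k+1)) + ereal d" by simp
  also have "\<dots> \<le> abs_comp_ratio A + ereal d"
    using ratio_k[OF assms k1] by (rule add_right_mono)
  finally show "2 \<le> abs_comp_ratio A + ereal d" by simp
qed

end
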